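(* If $X$ is a locally compact Hausdorff space and $Y$ is an MG-space, then $X\times Y$ is an MG-space.
   Context: A space $X$ is Menger if for each sequence $(\mathcal{U}_n)$ of open covers of $X$ there is a sequence $(\mathcal{V}_n)$ with each $\mathcal{V}_n$ a finite subset of $\mathcal{U}_n$ and $\bigcup_{n}\bigcup\mathcal{V}_n=X$. A space $X$ is Menger generated (an MG-space) if a subset $U\subseteq X$ is open in $X$ whenever $U\cap M$ is open in $M$ for every Menger subspace $M$ of $X$. *)

theory Defs
  imports "HOL-Analysis.Analysis"
begin

definition open_cover_of :: "'a topology \<Rightarrow> 'a set set \<Rightarrow> bool" where
  "open_cover_of T \<U> \<longleftrightarrow> (\<forall>U\<in>\<U>. openin T U) \<and> \<Union>\<U> = topspace T"

definition Menger_space :: "'a topology \<Rightarrow> bool" where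
  "Menger_space T \<longleftrightarrow>
     (\<forall>\<U> :: nat \<Rightarrow> 'a set set. (\<forall>n. open_cover_of T (\<U> n)) \<longrightarrow>
        (\<exists>\<V> :: nat \<Rightarrow> 'a set set. (\<forall>n. finite (\<V> n) \<and> \<V> n \<subseteq> \<U> n) \<and>
             (\<Union>n. \<Union>(\<V> n)) = topspace T))"

definition MG_space :: "'a topology \<Rightarrow> bool" where
  "MG_space T \<longleftrightarrow>
     (\<forall>U \<subseteq> topspace T.
        (\<forall>M \<subseteq> topspace T. Menger_space (subtopology T M) \<longrightarrow> openin (subtopology T M) (U \<inter> M))
        \<longrightarrow> openin T U)"

end

theory Submission
  imports Defs
begin

lemma compact_imp_Menger:
  assumes "compact_space T"
  shows "Menger_space T"
  unfolding Menger_space_def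
proof (intro allI impI)
  fix \<U> :: "nat \<Rightarrow> 'a set set"
  assume cov: "\<forall>n. open_cover_of T (\<U> n)"
  have "\<forall>n. \<exists>F. finite F \<and> F \<subseteq> \<U> n \<and> topspace T \<subseteq> \<Union>F"
  proof
    fix n
    from cov have h: "(\<forall>U\<in>\<U> n. openin T U) \<and> \<Union>(\<U> n) = topspace T"
      by (simp add: open_cover_of_def)
    have "\<forall>U. (\<forall>x\<in>U. openin T x) \<and> topspace T \<subseteq> \<Union>U \<longrightarrow> (\<exists>F. finite F \<and> F \<subseteq> U \<and> topspace T \<subseteq> \<Union>F)"
      using assms unfolding compact_space_def compactin_def by (rule conjunct2)
    then have "(\<forall>x\<in>\<U> n. openin T x) \<and> topspace T \<subseteq> \<Union>(\<U> n) \<longrightarrow> (\<exists>F. finite F \<and> F \<subseteq> \<U> n \<and> topspace T \<subseteq> \<Union>F)"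
      by (rule spec)
    moreover have "(\<forall>x\<in>\<U> n. openin T x) \<and> topspace T \<subseteq> \<Union>(\<U> n)" using h by simp
    ultimately show "\<exists>F. finite F \<and> F \<subseteq> \<U> n \<and> topspace T \<subseteq> \<Union>F"
      by (rule mp)
  qed
  then obtain V where V: "\<And>n. finite (V n) \<and> V n \<subseteq> \<U> n \<and> topspace T \<subseteq> \<Union>(V n)"
    by metis
  have "(\<Union>n. \<Union>(V n)) = topspace T"
  proof
    show "(\<Union>n. \<Union>(V n)) \<subseteq> topspace T"
      using V cov unfolding open_cover_of_def by blast
    show "topspace T \<subseteq> (\<Union>n. \<Union>(V n))" using V[of 0] by blast
  qed
  then show "\<exists>\<V>. (\<forall>n. finite (\<V> n) \<and> \<V> n \<subseteq> \<U> n) \<and> (\<Union>n. \<Union>(\<V> n)) = topspace T"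
    using V by (intro exI[of _ V] conjI allI) auto
qed

lemma compact_Menger_prod:
  assumes A: "compact_space A" and B: "Menger_space B"
  shows "Menger_space (prod_topology A B)"
  unfolding Menger_space_def
proof (intro allI impI)
  fix \<U> :: "nat \<Rightarrow> ('a \<times> 'b) set set"
  assume cov: "\<forall>n. open_cover_of (prod_topology A B) (\<U> n)"
  define P where "P n Q \<longleftrightarrow> (\<exists>F. finite F \<and> F \<subseteq> \<U> n \<and> topspace A \<times> Q \<subseteq> \<Union>F)" for n Q
  define Q' where "Q' n = {Q. openin B Q \<and> P n Q}" for n
  have Q'cov: "open_cover_of B (Q' n)" for n
  proof -
    have "topspace B \<subseteq> \<Union>(Q' n)"
    proof
      fix y assume y: "y \<in> topspace B"
      have c: "compactin (prod_topology A B) (topspace A \<times> {y})"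
        using A y by (simp add: compactin_Times compact_space_def)
      from cov have oc: "(\<forall>U\<in>\<U> n. openin (prod_topology A B) U) \<and> \<Union>(\<U> n) = topspace (prod_topology A B)"
        by (simp add: open_cover_of_def)
      then have "topspace A \<times> {y} \<subseteq> \<Union>(\<U> n)" using y by auto
      moreover have "\<forall>U. (\<forall>x\<in>U. openin (prod_topology A B) x) \<and> topspace A \<times> {y} \<subseteq> \<Union>U \<longrightarrow> (\<exists>F. finite F \<and> F \<subseteq> U \<and> topspace A \<times> {y} \<subseteq> \<Union>F)"
        using c unfolding compactin_def by (rule conjunct2)
      then have "(\<forall>x\<in>\<U> n. openin (prod_topology A B) x) \<and> topspace A \<times> {y} \<subseteq> \<Union>(\<U> n) \<longrightarrow> (\<exists>F. finite F \<and> F \<subseteq> \<U> n \<and> topspace A \<times> {y} \<subseteq> \<Union>F)"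
        by (rule spec)
      ultimately have "\<exists>F. finite F \<and> F \<subseteq> \<U> n \<and> topspace A \<times> {y} \<subseteq> \<Union>F"
        using oc by simp
      then obtain F where F: "finite F" "F \<subseteq> \<U> n" "topspace A \<times> {y} \<subseteq> \<Union>F"
        by blast
      have "openin (prod_topology A B) (\<Union>F)" using F oc by blast
      then obtain U V where UV: "openin A U" "openin B V" "topspace A \<subseteq> U" "y \<in> V" "U \<times> V \<subseteq> \<Union>F"
        using tube_lemma_left[of A B "\<Union>F" "topspace A" y] F(3) y A
        by (metis compact_space_def)
      have "V \<in> Q' n" unfolding Q'_def P_def using UV F by blast
      then show "y \<in> \<Union>(Q' n)" using UV by blast
    qed
    moreover have "\<Union>(Q' n) \<subseteq> topspace B" unfolding Q'_def using openin_subset by blast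
    ultimately show ?thesis unfolding open_cover_of_def Q'_def by auto
  qed
  then obtain V' where V': "\<And>n. finite (V' n) \<and> V' n \<subseteq> Q' n" and Vc: "(\<Union>n. \<Union>(V' n)) = topspace B"
    using B unfolding Menger_space_def by metis
  define G where "G n Q = (SOME F. finite F \<and> F \<subseteq> \<U> n \<and> topspace A \<times> Q \<subseteq> \<Union>F)" for n Q
  have G: "finite (G n Q) \<and> G n Q \<subseteq> \<U> n \<and> topspace A \<times> Q \<subseteq> \<Union>(G n Q)" if "Q \<in> Q' n" for n Q
  proof -
    from that have "P n Q" unfolding Q'_def by blast
    then show ?thesis unfolding P_def G_def by (rule someI_ex)
  qed
  define V where "V n = \<Union>(G n ` V' n)" for n
  have fin: "finite (V n) \<and> V n \<subseteq> \<U> n" for n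
    using V'[of n] G unfolding V_def by blast
  have "(\<Union>n. \<Union>(V n)) = topspace (prod_topology A B)"
  proof
    show "(\<Union>n. \<Union>(V n)) \<subseteq> topspace (prod_topology A B)"
      using fin cov unfolding open_cover_of_def by blast
    show "topspace (prod_topology A B) \<subseteq> (\<Union>n. \<Union>(V n))"
    proof
      fix p assume "p \<in> topspace (prod_topology A B)"
      then obtain a b where p: "p = (a,b)" "a \<in> topspace A" "b \<in> topspace B" by auto
      then obtain n Q where nO: "Q \<in> V' n" "b \<in> Q" using Vc by blast
      then have "Q \<in> Q' n" using V' by blast
      then have "(a,b) \<in> \<Union>(G n Q)" using G p nO by blast
      then show "p \<in> (\<Union>n. \<Union>(V n))" using nO p unfolding V_def by blast
    qed
  qed
  then show "\<exists>\<V>. (\<forall>n. finite (\<V> n) \<and> \<V> n \<subseteq> \<U> n) \<and> (\<Union>n. \<Union>(\<V> n)) = topspace (prod_topology A B)"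
    using fin by (intro exI[of _ V] conjI allI) auto
qed

theorem proposition4p22:
  fixes X :: "'a topology" and Y :: "'b topology"
  assumes "locally_compact_space X" and "Hausdorff_space X" and "MG_space Y"
  shows "MG_space (prod_topology X Y)"
  unfolding MG_space_def
proof (intro allI impI)
  fix W assume Wsub: "W \<subseteq> topspace (prod_topology X Y)"
    and H: "\<forall>M \<subseteq> topspace (prod_topology X Y). Menger_space (subtopology (prod_topology X Y) M)
              \<longrightarrow> openin (subtopology (prod_topology X Y) M) (W \<inter> M)"
  have nb: "neighbourhood_base_of (compactin X) X"
    using assms(1,2) locally_compact_space_neighbourhood_base by blast
  have Hc: "openin (subtopology (prod_topology X Y) M) (W \<inter> M)"
    if "M \<subseteq> topspace (prod_topology X Y)" "Menger_space (subtopology (prod_topology X Y) M)" for M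
    using H that by blast
  show "openin (prod_topology X Y) W"
    unfolding openin_subopen[of _ W]
  proof
    fix p assume "p \<in> W"
    then obtain x0 y0 where p: "p = (x0,y0)" "(x0,y0) \<in> W" by (cases p) auto
    then have x0: "x0 \<in> topspace X" and y0: "y0 \<in> topspace Y" using Wsub by auto
    define Wy where "Wy = {x \<in> topspace X. (x,y0) \<in> W}"
    have "openin X Wy"
      unfolding openin_subopen[of _ Wy]
    proof
      fix x assume x: "x \<in> Wy"
      then have xt: "x \<in> topspace X" unfolding Wy_def by auto
      then obtain U C where UC: "openin X U" "compactin X C" "x \<in> U" "U \<subseteq> C"
        using assms(1) unfolding locally_compact_space_def by blast
      let ?M = "C \<times> {y0}"
      have cM: "compactin (prod_topology X Y) ?M"
        using UC y0 by (simp add: compactin_Times)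
      then have "Menger_space (subtopology (prod_topology X Y) ?M)"
        using compact_imp_Menger compact_space_subtopology by blast
      moreover have "?M \<subseteq> topspace (prod_topology X Y)" using cM compactin_subset_topspace by blast
      ultimately have "openin (subtopology (prod_topology X Y) ?M) (W \<inter> ?M)" using Hc by blast
      then obtain T where T: "openin (prod_topology X Y) T" "W \<inter> ?M = T \<inter> ?M"
        unfolding openin_subtopology by blast
      have "(x,y0) \<in> T" using T(2) x UC unfolding Wy_def by blast
      then obtain U1 V1 where U1: "openin X U1" "openin Y V1" "x \<in> U1" "y0 \<in> V1" "U1 \<times> V1 \<subseteq> T"
        using T(1) unfolding openin_prod_topology_alt by blast
      have "U \<inter> U1 \<subseteq> Wy"
      proof
        fix x' assume "x' \<in> U \<inter> U1"
        then have "(x',y0) \<in> T \<inter> ?M" using U1 UC by blast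
        then show "x' \<in> Wy" using T(2) UC(1) openin_subset \<open>x' \<in> U \<inter> U1\<close> unfolding Wy_def by blast
      qed
      then show "\<exists>T. openin X T \<and> x \<in> T \<and> T \<subseteq> Wy" using UC U1 by blast
    qed
    moreover have "x0 \<in> Wy" using x0 p unfolding Wy_def by blast
    moreover have "\<forall>W x. openin X W \<and> x \<in> W \<longrightarrow> (\<exists>U V. openin X U \<and> compactin X V \<and> x \<in> U \<and> U \<subseteq> V \<and> V \<subseteq> W)"
      using nb unfolding neighbourhood_base_of .
    ultimately have "\<exists>U K. openin X U \<and> compactin X K \<and> x0 \<in> U \<and> U \<subseteq> K \<and> K \<subseteq> Wy"
      by simp
    then obtain U K where UK: "openin X U" "compactin X K" "x0 \<in> U" "U \<subseteq> K" "K \<subseteq> Wy"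
      by blast
    define V where "V = {y \<in> topspace Y. K \<times> {y} \<subseteq> W}"
    have MGY: "\<And>U. U \<subseteq> topspace Y \<Longrightarrow> (\<And>M. M \<subseteq> topspace Y \<Longrightarrow> Menger_space (subtopology Y M) \<Longrightarrow> openin (subtopology Y M) (U \<inter> M)) \<Longrightarrow> openin Y U"
      using assms(3) unfolding MG_space_def by blast
    have "openin Y V"
    proof (rule MGY)
      show "V \<subseteq> topspace Y" unfolding V_def by blast
      show "openin (subtopology Y M) (V \<inter> M)" if Msub: "M \<subseteq> topspace Y" and MM: "Menger_space (subtopology Y M)" for M
      proof -
        show "openin (subtopology Y M) (V \<inter> M)"
          unfolding openin_subopen[of _ "V \<inter> M"]
        proof
          fix y1 assume y1: "y1 \<in> V \<inter> M"
          have KMsub: "K \<times> M \<subseteq> topspace (prod_topology X Y)"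
            using UK(2) Msub compactin_subset_topspace by fastforce
          have "Menger_space (subtopology (prod_topology X Y) (K \<times> M))"
            unfolding subtopology_Times
            using compact_Menger_prod[OF compact_space_subtopology[OF UK(2)] MM] .
          then have "openin (subtopology (prod_topology X Y) (K \<times> M)) (W \<inter> (K \<times> M))"
            using Hc KMsub by blast
          then obtain T where T: "openin (prod_topology X Y) T" "W \<inter> (K \<times> M) = T \<inter> (K \<times> M)"
            unfolding openin_subtopology by blast
          have k1: "K \<times> {y1} \<subseteq> W" using y1 unfolding V_def by blast
          have k2: "K \<times> {y1} \<subseteq> K \<times> M" using y1 by auto
          have "K \<times> {y1} \<subseteq> W \<inter> (K \<times> M)" using k1 k2 by (rule Int_greatest)
          then have "K \<times> {y1} \<subseteq> T \<inter> (K \<times> M)" by (simp only: T(2))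
          then have kT: "K \<times> {y1} \<subseteq> T" by (rule subset_trans[OF _ Int_lower1])
          have yt: "y1 \<in> topspace Y" using y1 Msub by auto
          obtain U2 N where N: "openin X U2" "openin Y N" "K \<subseteq> U2" "y1 \<in> N" "U2 \<times> N \<subseteq> T"
            using tube_lemma_left[OF T(1) UK(2) yt kT] by blast
          have "N \<inter> M \<subseteq> V"
          proof
            fix y assume y: "y \<in> N \<inter> M"
            have "K \<times> {y} \<subseteq> U2 \<times> N" using N(3) y by auto
            then have j1: "K \<times> {y} \<subseteq> T" using N(5) by (rule subset_trans)
            have j2: "K \<times> {y} \<subseteq> K \<times> M" using y by auto
            have "K \<times> {y} \<subseteq> T \<inter> (K \<times> M)" using j1 j2 by (rule Int_greatest)
            then have "K \<times> {y} \<subseteq> W \<inter> (K \<times> M)" by (simp only: T(2))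
            then have "K \<times> {y} \<subseteq> W" by (rule subset_trans[OF _ Int_lower1])
            then show "y \<in> V" using y Msub unfolding V_def by blast
          qed
          moreover have "openin (subtopology Y M) (N \<inter> M)"
            using N(2) by (rule openin_subtopology_Int)
          ultimately show "\<exists>T. openin (subtopology Y M) T \<and> y1 \<in> T \<and> T \<subseteq> V \<inter> M"
            using y1 N(4) by blast
        qed
      qed
    qed
    moreover have "y0 \<in> V" using UK(5) y0 unfolding V_def Wy_def by blast
    moreover have "U \<times> V \<subseteq> W" using UK(4) unfolding V_def by blast
    ultimately show "\<exists>T. openin (prod_topology X Y) T \<and> p \<in> T \<and> T \<subseteq> W"
      using UK(1,3) p \<open>openin Y V\<close> by (metis SigmaI openin_prod_Times_iff)
  qed
qed

end
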